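(* Let $R\subseteq\mathbb{C}$ be a discrete subset (i.e. without accumulation points in $\mathbb{C}$). Then for each $n\in\mathbb{N}$ there are only finitely many frieze patterns over $R\setminus\{0\}$ of height $n$.
   Context: A frieze pattern of height $n$ over $S\subseteq\mathbb{C}$ is a family $(c_{i,j})_{i\in\mathbb{Z},\ i\le j\le i+n+3}$ of complex numbers such that: - $c_{i,i}=c_{i,i+n+3}=0$ and $c_{i,i+1}=c_{i,i+n+2}=1$; - $c_{i,j}\in S$ for $i+2\le j\le i+n+1$; - every adjacent $2\times2$ determinant $c_{i,j}c_{i+1,j+1}-c_{i,j+1}c_{i+1,j}$ (all entries defined) equals $1$. *)

theory Defs
  imports "HOL-Analysis.Analysis"
begin

definition frieze_dom :: "nat \<Rightarrow> (int \<times> int) set" where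
  "frieze_dom n = {(i, j). i \<le> j \<and> j \<le> i + int n + 3}"

definition frieze_pattern :: "nat \<Rightarrow> complex set \<Rightarrow> (int \<times> int \<Rightarrow> complex) \<Rightarrow> bool" where
  "frieze_pattern n S c \<longleftrightarrow>
     c \<in> extensional (frieze_dom n) \<and>
     (\<forall>i. c (i, i) = 0 \<and> c (i, i + int n + 3) = 0 \<and>
          c (i, i + 1) = 1 \<and> c (i, i + int n + 2) = 1) \<and>
     (\<forall>i j. i + 2 \<le> j \<and> j \<le> i + int n + 1 \<longrightarrow> c (i, j) \<in> S) \<and>
     (\<forall>i j. i + 1 \<le> j \<and> j \<le> i + int n + 2 \<longrightarrow>
          c (i, j) * c (i + 1, j + 1) - c (i, j + 1) * c (i + 1, j) = 1)"

end

theory Submission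
  imports Defs
begin


lemma alg1: "(A::complex)*X - B*Y = 1 \<Longrightarrow> B*Z - C*X = 1 \<Longrightarrow> Y+Z = a*X \<Longrightarrow> X \<noteq> 0 \<Longrightarrow> A + C = a*B"
proof -
  assume h: "A*X - B*Y = 1" "B*Z - C*X = 1" "Y+Z = a*X" "X \<noteq> 0"
  have "X*(A+C) = X*(a*B)"
  proof -
    have "X*(A+C) = B*(Y+Z)" using h(1,2) by (simp add: algebra_simps)
    also have "\<dots> = X*(a*B)" using h(3) by simp
    finally show ?thesis .
  qed
  then show ?thesis using h(4) by simp
qed

lemma alg2: "(B::complex)*x0 - A*x1 = xk \<Longrightarrow> A + C = a*B \<Longrightarrow> x0 + x2 = a*x1 \<Longrightarrow> C*x1 - B*x2 = xk"
proof -
  assume h: "B*x0 - A*x1 = xk" "A + C = a*B" "x0 + x2 = a*x1"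
  have "C*x1 - B*x2 = (A+C)*x1 - B*(x0+x2) + (B*x0 - A*x1)" by (simp add: algebra_simps)
  also have "\<dots> = xk" using h by (simp add: algebra_simps)
  finally show ?thesis .
qed

locale frz =
  fixes n :: nat and S :: "complex set" and c :: "int \<times> int \<Rightarrow> complex"
  assumes fp: "frieze_pattern n S c" and nz: "0 \<notin> S"
begin

lemma ext: "c \<in> extensional (frieze_dom n)" using fp unfolding frieze_pattern_def by blast
lemma b0: "c (i,i) = 0" using fp unfolding frieze_pattern_def by blast
lemma b1: "c (i,i+int n+3) = 0" using fp unfolding frieze_pattern_def by blast
lemma b2: "c (i,i+1) = 1" using fp unfolding frieze_pattern_def by blast
lemma b3: "c (i,i+int n+2) = 1" using fp unfolding frieze_pattern_def by blast
lemma inS: "i+2 \<le> j \<Longrightarrow> j \<le> i+int n+1 \<Longrightarrow> c(i,j) \<in> S" using fp unfolding frieze_pattern_def by blast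
lemma det: "i+1 \<le> j \<Longrightarrow> j \<le> i+int n+2 \<Longrightarrow> c(i,j)*c(i+1,j+1) - c(i,j+1)*c(i+1,j) = 1"
  using fp unfolding frieze_pattern_def by blast
lemma nonz: "i+1 \<le> j \<Longrightarrow> j \<le> i+int n+2 \<Longrightarrow> c(i,j) \<noteq> 0"
proof -
  assume a: "i+1 \<le> j" "j \<le> i+int n+2"
  consider "j = i+1" | "j = i+int n+2" | "i+2 \<le> j \<and> j \<le> i+int n+1" using a by linarith
  then show ?thesis
  proof cases
    case 1 then show ?thesis using b2 by simp
  next
    case 2 then show ?thesis using b3 by simp
  next
    case 3 then show ?thesis using inS nz by metis
  qed
qed

lemma rec_aux: "int d \<le> int n + 1 \<Longrightarrow> c(j-1-int d,j-1)+c(j-1-int d,j+1) = c(j-1,j+1)*c(j-1-int d,j)"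
proof (induction d)
  case 0
  then show ?case using b0[of "j-1"] b2[of "j-1"] by simp
next
  case (Suc d)
  define i where "i = j - 1 - int (Suc d)"
  have ii: "i + 1 = j - 1 - int d" unfolding i_def by simp
  from Suc.IH Suc.prems have H: "c(j-1-int d,j-1)+c(j-1-int d,j+1) = c(j-1,j+1)*c(j-1-int d,j)" by simp
  have IH: "c(i+1,j-1)+c(i+1,j+1) = c(j-1,j+1)*c(i+1,j)" unfolding ii by (rule H)
  have D1: "c(i,j-1)*c(i+1,j) - c(i,j)*c(i+1,j-1) = 1"
    using det[of i "j-1"] Suc.prems unfolding i_def by simp
  have D2: "c(i,j)*c(i+1,j+1) - c(i,j+1)*c(i+1,j) = 1"
    using det[of i j] Suc.prems unfolding i_def by simp
  have N: "c(i+1,j) \<noteq> 0" using nonz[of "i+1" j] Suc.prems unfolding i_def by simp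
  have "c(i,j-1)+c(i,j+1) = c(j-1,j+1)*c(i,j)"
    by (rule alg1[OF D1 D2 IH N])
  then show ?case unfolding i_def .
qed

lemma recur: "j - int n - 2 \<le> i \<Longrightarrow> i \<le> j - 1 \<Longrightarrow> c(i,j-1)+c(i,j+1) = c(j-1,j+1)*c(i,j)"
  using rec_aux[of "nat (j-1-i)" j] by simp

lemma G_aux: "1 \<le> k \<Longrightarrow> k + int d \<le> int n + 2 \<Longrightarrow>
   c(k,k+int d+1)*c(0,k+int d) - c(k,k+int d)*c(0,k+int d+1) = c(0,k)"
proof (induction d)
  case 0
  then show ?case using b0[of k] b2[of k] by simp
next
  case (Suc d)
  define l where "l = k + int d"
  have IH: "c(k,l+1)*c(0,l) - c(k,l)*c(0,l+1) = c(0,k)" using Suc unfolding l_def by simp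
  have R1: "c(k,l)+c(k,l+2) = c(l,l+2)*c(k,l+1)"
    using recur[of "l+1" k] Suc.prems unfolding l_def by (simp add: add.commute add.left_commute)
  have R2: "c(0,l)+c(0,l+2) = c(l,l+2)*c(0,l+1)"
    using recur[of "l+1" 0] Suc.prems unfolding l_def by (simp add: add.commute add.left_commute)
  have "c(k,l+2)*c(0,l+1) - c(k,l+1)*c(0,l+2) = c(0,k)" by (rule alg2[OF IH R1 R2])
  moreover have e: "k+int(Suc d) = l+1" unfolding l_def by simp
  ultimately show ?case unfolding e by (simp add: add.commute)
qed

lemma CF_aux: "1 \<le> k \<Longrightarrow> k + int d \<le> int n + 2 \<Longrightarrow>
   c(k,k+int d) = c(0,k)*c(0,k+int d)*(\<Sum>i\<in>{k..<k+int d}. 1/(c(0,i)*c(0,i+1)))"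
proof (induction d)
  case 0
  then show ?case using b0[of k] by simp
next
  case (Suc d)
  define l where "l = k + int d"
  have IH: "c(k,l) = c(0,k)*c(0,l)*(\<Sum>i\<in>{k..<l}. 1/(c(0,i)*c(0,i+1)))" using Suc unfolding l_def by simp
  have G: "c(k,l+1)*c(0,l) - c(k,l)*c(0,l+1) = c(0,k)" using G_aux[of k d] Suc.prems unfolding l_def by simp
  have N: "c(0,l) \<noteq> 0" using nonz[of 0 l] Suc.prems unfolding l_def by simp
  have N1: "c(0,l+1) \<noteq> 0" using nonz[of 0 "l+1"] Suc.prems unfolding l_def by simp
  have set: "{k..<l+1} = insert l {k..<l}" using Suc.prems unfolding l_def by auto
  have "c(k,l+1) = (c(0,k) + c(k,l)*c(0,l+1))/c(0,l)" using G N by (simp add: field_simps)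
  also have "\<dots> = c(0,k)*c(0,l+1)*(\<Sum>i\<in>{k..<l+1}. 1/(c(0,i)*c(0,i+1)))"
    unfolding set IH using N N1 by (simp add: field_simps)
  moreover have e: "k+int(Suc d) = l+1" unfolding l_def by simp
  ultimately show ?case unfolding e by simp
qed

lemma CF: "1 \<le> k \<Longrightarrow> k \<le> l \<Longrightarrow> l \<le> int n + 2 \<Longrightarrow>
   c(k,l) = c(0,k)*c(0,l)*(\<Sum>i\<in>{k..<l}. 1/(c(0,i)*c(0,i+1)))"
  using CF_aux[of k "nat (l-k)"] by simp

end


lemma alg3: "(a::complex)*X - b*Y = 1 \<Longrightarrow> a*X' - b*Y = 1 \<Longrightarrow> a \<noteq> 0 \<Longrightarrow> X = X'"
proof -
  assume h: "a*X - b*Y = 1" "a*X' - b*Y = 1" "a \<noteq> 0"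
  then have "a*X = a*X'" by (simp add: algebra_simps)
  then show ?thesis using h(3) by simp
qed

lemma alg4: "(X::complex)*a - b*Y = 1 \<Longrightarrow> X'*a - b*Y = 1 \<Longrightarrow> a \<noteq> 0 \<Longrightarrow> X = X'"
  using alg3[of a X b Y X'] by (simp add: mult.commute)

lemma row_up:
  assumes A: "frz n S c" and B: "frz n S c'"
    and E: "\<forall>j. i \<le> j \<and> j \<le> i+int n+3 \<longrightarrow> c(i,j) = c'(i,j)"
  shows "int d \<le> int n + 3 \<Longrightarrow> c(i+1,i+1+int d) = c'(i+1,i+1+int d)"
proof (induction d)
  case 0
  then show ?case using frz.b0[OF A] frz.b0[OF B] by simp
next
  case (Suc d)
  show ?case
  proof (cases "int d = int n + 2")
    case True
    then have e: "i+1+int (Suc d) = (i+1)+int n+3" by simp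
    show ?thesis unfolding e using frz.b1[OF A, of "i+1"] frz.b1[OF B, of "i+1"] by simp
  next
    case False
    define jj where "jj = i+1+int d"
    have D1: "c(i,jj)*c(i+1,jj+1) - c(i,jj+1)*c(i+1,jj) = 1"
      using frz.det[OF A, of i jj] Suc.prems False unfolding jj_def by simp
    have D2: "c'(i,jj)*c'(i+1,jj+1) - c'(i,jj+1)*c'(i+1,jj) = 1"
      using frz.det[OF B, of i jj] Suc.prems False unfolding jj_def by simp
    have N: "c(i,jj) \<noteq> 0" using frz.nonz[OF A, of i jj] Suc.prems False unfolding jj_def by simp
    have e1: "c(i,jj) = c'(i,jj)" "c(i,jj+1) = c'(i,jj+1)" using E Suc.prems False unfolding jj_def by auto
    have e2: "c(i+1,jj) = c'(i+1,jj)" using Suc unfolding jj_def by simp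
    have X: "c(i+1,jj+1) = c'(i+1,jj+1)"
      by (rule alg3[OF D1]) (use D2 e1 e2 N in simp_all)
    have e: "i+1+int(Suc d) = jj+1" unfolding jj_def by simp
    show ?thesis unfolding e by (rule X)
  qed
qed

lemma row_down:
  assumes A: "frz n S c" and B: "frz n S c'"
    and E: "\<forall>j. i+1 \<le> j \<and> j \<le> i+1+int n+3 \<longrightarrow> c(i+1,j) = c'(i+1,j)"
  shows "int d \<le> int n + 3 \<Longrightarrow> c(i,i+int n+3-int d) = c'(i,i+int n+3-int d)"
proof (induction d)
  case 0
  then show ?case using frz.b1[OF A] frz.b1[OF B] by simp
next
  case (Suc d)
  show ?case
  proof (cases "int d = int n + 2")
    case True
    then have e: "i+int n+3-int (Suc d) = i" by simp
    show ?thesis unfolding e using frz.b0[OF A] frz.b0[OF B] by simp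
  next
    case False
    define j where "j = i+int n+2-int d"
    have D1: "c(i,j)*c(i+1,j+1) - c(i,j+1)*c(i+1,j) = 1"
      using frz.det[OF A, of i j] Suc.prems False unfolding j_def by simp
    have D2: "c'(i,j)*c'(i+1,j+1) - c'(i,j+1)*c'(i+1,j) = 1"
      using frz.det[OF B, of i j] Suc.prems False unfolding j_def by simp
    have N: "c(i+1,j+1) \<noteq> 0" using frz.nonz[OF A, of "i+1" "j+1"] Suc.prems False unfolding j_def by simp
    have e1: "c(i+1,j) = c'(i+1,j)" "c(i+1,j+1) = c'(i+1,j+1)" using E Suc.prems False unfolding j_def by auto
    have e2: "c(i,j+1) = c'(i,j+1)" using Suc unfolding j_def by (simp add: algebra_simps)
    have "c(i,j) = c'(i,j)"
      by (rule alg4[OF D1]) (use D2 e1 e2 N in simp_all)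
    moreover have "i+int n+3-int(Suc d) = j" unfolding j_def by simp
    ultimately show ?thesis by simp
  qed
qed

lemma rows_eq:
  assumes A: "frz n S c" and B: "frz n S c'"
    and E: "\<forall>j. 0 \<le> j \<and> j \<le> int n+3 \<longrightarrow> c(0,j) = c'(0,j)"
  shows "c = c'"
proof -
  have all: "\<forall>j. i \<le> j \<and> j \<le> i+int n+3 \<longrightarrow> c(i,j) = c'(i,j)" for i
  proof (induction i rule: int_induct[where k=0])
    case base
    then show ?case using E by simp
  next
    case (step1 i)
    show ?case
    proof (intro allI impI)
      fix j assume j: "i + 1 \<le> j \<and> j \<le> i + 1 + int n + 3"
      have "c(i+1,i+1+int (nat (j-i-1))) = c'(i+1,i+1+int (nat (j-i-1)))"
        using row_up[OF A B step1(2), of "nat (j-i-1)"] j by simp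
      then show "c(i+1,j) = c'(i+1,j)" using j by simp
    qed
  next
    case (step2 i)
    have E2: "\<forall>j. (i-1)+1 \<le> j \<and> j \<le> (i-1)+1+int n+3 \<longrightarrow> c((i-1)+1,j) = c'((i-1)+1,j)"
      using step2(2) by simp
    show ?case
    proof (intro allI impI)
      fix j assume j: "i - 1 \<le> j \<and> j \<le> i - 1 + int n + 3"
      have "c(i-1,(i-1)+int n+3-int (nat (i-1+int n+3-j))) = c'(i-1,(i-1)+int n+3-int (nat (i-1+int n+3-j)))"
        using row_down[OF A B E2, of "nat (i-1+int n+3-j)"] j by simp
      then show "c(i-1,j) = c'(i-1,j)" using j by simp
    qed
  qed
  show ?thesis
  proof
    fix p :: "int \<times> int"
    obtain i j where p: "p = (i,j)" by fastforce
    show "c p = c' p"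
    proof (cases "p \<in> frieze_dom n")
      case True
      then show ?thesis using all[of i] p unfolding frieze_dom_def by auto
    next
      case False
      then show ?thesis using frz.ext[OF A] frz.ext[OF B] unfolding extensional_def p by auto
    qed
  qed
qed



context frz
begin

lemma xnz: "1 \<le> i \<Longrightarrow> i \<le> int n + 2 \<Longrightarrow> c(0,i) \<noteq> 0"
  using nonz[of 0 i] by simp

lemma bound:
  assumes dpos: "\<delta> > 0" and dS: "\<forall>s\<in>S. \<delta> \<le> norm s"
    and j: "2 \<le> j" "j \<le> int n+1"
  shows "norm (c(0,j)) \<le> (max 1 (2*(real n+3)/\<delta>))^(n+1)"
proof (rule ccontr)
  define q where "q = max 1 (2*(real n+3)/\<delta>)"
  define x where "x i = c(0,i)" for i
  have q1: "1 \<le> q" unfolding q_def by simp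
  have q2: "2*(real n+3)/\<delta> \<le> q" unfolding q_def by simp
  have qpos: "q > 0" using q1 by simp
  have mono: "a \<le> b \<Longrightarrow> q^a \<le> q^b" for a b using power_increasing[OF _ q1] by blast
  assume "\<not> norm (c(0,j)) \<le> (max 1 (2*(real n+3)/\<delta>))^(n+1)"
  then have big: "q^(n+1) < norm (x j)" unfolding q_def x_def by simp
  obtain r where r: "r \<le> n" and empty: "\<forall>i\<in>{2..int n+1}. \<not>(q^r < norm(x i) \<and> norm(x i) \<le> q^(Suc r))"
  proof (rule ccontr)
    assume "\<not> thesis"
    then have all: "\<forall>r\<le>n. \<exists>i\<in>{2..int n+1}. q^r < norm(x i) \<and> norm(x i) \<le> q^(Suc r)"
      using that by blast
    define h where "h i = (LEAST r. norm(x i) \<le> q^(Suc r))" for i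
    have "{0..n} \<subseteq> h ` {2..int n+1}"
    proof
      fix r assume "r \<in> {0..n}"
      then obtain i where i: "i\<in>{2..int n+1}" "q^r < norm(x i)" "norm(x i) \<le> q^(Suc r)" using all by auto
      have "h i = r" unfolding h_def
      proof (rule Least_equality)
        show "norm (x i) \<le> q ^ Suc r" by fact
      next
        fix y assume y: "norm (x i) \<le> q ^ Suc y"
        show "r \<le> y"
        proof (rule ccontr)
          assume "\<not> r \<le> y"
          then have "q^Suc y \<le> q^r" using mono[of "Suc y" r] by simp
          then show False using y i(2) by simp
        qed
      qed
      then show "r \<in> h ` {2..int n+1}" using i(1) by blast
    qed
    then have "card {0..n} \<le> card (h ` {2..int n+1})" by (rule card_mono[rotated]) simp
    also have "\<dots> \<le> card {2..int n+1}" by (rule card_image_le) simp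
    also have "\<dots> = n" by simp
    finally show False by simp
  qed
  have cls: "norm(x i) \<le> q^r \<or> q^(Suc r) < norm(x i)" if hi: "1 \<le> i" "i \<le> int n+2" for i
  proof -
    consider "i = 1" | "i = int n+2" | "i \<in> {2..int n+1}" using hi by (simp, linarith)
    then show ?thesis
    proof cases
      case 1 then show ?thesis using b2[of 0] one_le_power[OF q1, of r] unfolding x_def by simp
    next
      case 2 then show ?thesis using b3[of 0] one_le_power[OF q1, of r] unfolding x_def by simp
    next
      case 3 then show ?thesis using empty by force
    qed
  qed
  define K where "K = {i\<in>{1..j}. norm(x i) \<le> q^r}"
  define L where "L = {i\<in>{j..int n+2}. norm(x i) \<le> q^r}"
  define k where "k = Max K"
  define l where "l = Min L"
  have jns: "\<not> norm (x j) \<le> q^r" using big mono[of r "n+1"] r by simp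
  have finK: "finite K" "K \<noteq> {}"
  proof -
    show "finite K" unfolding K_def by (rule finite_subset[of _ "{1..j}"]) auto
    have "1 \<in> K" unfolding K_def using j b2[of 0] one_le_power[OF q1, of r] by (simp add: x_def)
    then show "K \<noteq> {}" by blast
  qed
  have finL: "finite L" "L \<noteq> {}"
  proof -
    show "finite L" unfolding L_def by (rule finite_subset[of _ "{j..int n+2}"]) auto
    have "int n + 2 \<in> L" unfolding L_def using j b3[of 0] one_le_power[OF q1, of r] by (simp add: x_def)
    then show "L \<noteq> {}" by blast
  qed
  have kK: "k \<in> K" unfolding k_def using finK by simp
  have lL: "l \<in> L" unfolding l_def using finL by simp
  have k1: "1 \<le> k" "k < j" using kK jns unfolding K_def by (auto, metis order.not_eq_order_implies_strict)
  have l1: "j < l" "l \<le> int n + 2" using lL jns unfolding L_def by (auto, metis order.not_eq_order_implies_strict)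
  have ksm: "norm (x k) \<le> q^r" using kK unfolding K_def by simp
  have lsm: "norm (x l) \<le> q^r" using lL unfolding L_def by simp
  have inter: "q^(Suc r) < norm(x i)" if "k < i" "i < l" for i
  proof -
    have "\<not> norm (x i) \<le> q^r"
    proof
      assume sm: "norm (x i) \<le> q^r"
      show False
      proof (cases "i \<le> j")
        case True
        then have "i \<in> K" unfolding K_def using sm that k1 by simp
        then have "i \<le> k" unfolding k_def using finK by simp
        then show False using that by simp
      next
        case False
        then have "i \<in> L" unfolding L_def using sm that l1 by simp
        then have "l \<le> i" unfolding l_def using finL by simp
        then show False using that by simp
      qed
    qed
    then show ?thesis using cls[of i] that k1 l1 by simp
  qed
  have "c(k,l) \<in> S" using inS[of k l] k1 l1 by simp
  then have dle: "\<delta> \<le> norm (c(k,l))" using dS by blast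
  have "c(k,l) = x k * x l * (\<Sum>i\<in>{k..<l}. 1/(x i * x (i+1)))"
    using CF[of k l] k1 l1 unfolding x_def by simp
  also have "\<dots> = (\<Sum>i\<in>{k..<l}. x k * x l /(x i * x (i+1)))"
    by (simp add: sum_distrib_left)
  finally have ceq: "c(k,l) = (\<Sum>i\<in>{k..<l}. x k * x l /(x i * x (i+1)))" .
  have tb: "norm (x k * x l /(x i * x (i+1))) \<le> 1/q" if i: "i \<in> {k..<l}" for i
  proof -
    have nzk: "x k \<noteq> 0" "x l \<noteq> 0" using xnz k1 l1 unfolding x_def by auto
    have qq: "q^r / q^(Suc r) = 1/q" using qpos by simp
    consider "i = k" | "i \<noteq> k" "i = l - 1" | "k < i" "i+1 < l" using i by fastforce
    then show ?thesis
    proof cases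
      case 1
      have I: "q^(Suc r) < norm (x (k+1))" using inter[of "k+1"] k1 l1 by simp
      have "x k * x l /(x i * x (i+1)) = x l / x (k+1)" using 1 nzk by simp
      then have "norm (x k * x l /(x i * x (i+1))) = norm (x l) / norm (x (k+1))" by (simp add: norm_divide)
      also have "\<dots> \<le> q^r / q^(Suc r)"
        by (rule frac_le) (use lsm I qpos in auto)
      finally show ?thesis using qq by simp
    next
      case 2
      have I: "q^(Suc r) < norm (x (l-1))" using inter[of "l-1"] 2 i by simp
      have "x k * x l /(x i * x (i+1)) = x k / x (l-1)" using 2 nzk by simp
      then have "norm (x k * x l /(x i * x (i+1))) = norm (x k) / norm (x (l-1))" by (simp add: norm_divide)
      also have "\<dots> \<le> q^r / q^(Suc r)"
        by (rule frac_le) (use ksm I qpos in auto)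
      finally show ?thesis using qq by simp
    next
      case 3
      have I1: "q^(Suc r) < norm (x i)" using inter[of i] 3 by simp
      have I2: "q^(Suc r) < norm (x (i+1))" using inter[of "i+1"] 3 by simp
      have "norm (x k * x l /(x i * x (i+1))) = (norm (x k) * norm (x l)) / (norm (x i) * norm (x (i+1)))"
        by (simp add: norm_divide norm_mult)
      also have "\<dots> \<le> (q^r*q^r) / (q^(Suc r)*q^(Suc r))"
        by (rule frac_le) (use ksm lsm I1 I2 qpos in \<open>auto intro: mult_mono\<close>)
      also have "\<dots> = 1/q * (1/q)" using qpos by (simp add: field_simps)
      also have "\<dots> \<le> 1/q * 1" using q1 qpos by (intro mult_left_mono) auto
      finally show ?thesis by simp
    qed
  qed
  have "norm (c(k,l)) \<le> (\<Sum>i\<in>{k..<l}. norm (x k * x l /(x i * x (i+1))))"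
    unfolding ceq by (rule norm_sum)
  also have "\<dots> \<le> of_nat (card {k..<l}) * (1/q)"
    by (rule sum_bounded_above) (use tb in auto)
  also have "\<dots> \<le> (real n + 1) * (1/q)"
  proof -
    have "card {k..<l} = nat (l - k)" by simp
    also have "\<dots> \<le> n + 1" using k1 l1 by simp
    finally show ?thesis using qpos by (intro mult_right_mono) auto
  qed
  also have "\<dots> < \<delta>"
  proof -
    have "(real n + 1) / q \<le> (real n + 1) / (2*(real n+3)/\<delta>)"
      by (rule divide_left_mono) (use q2 dpos qpos in auto)
    also have "\<dots> = (real n + 1) * \<delta> / (2*(real n+3))" by simp
    also have "\<dots> < \<delta>"
    proof -
      have "0 \<le> \<delta> * real n" using dpos by simp
      then have "0 < \<delta> * real n + \<delta> * 5" using dpos by linarith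
      then show ?thesis using dpos by (simp add: field_simps)
    qed
    finally show ?thesis by simp
  qed
  finally show False using dle by simp
qed

end


theorem corollary3p8:
  fixes R :: "complex set" and n :: nat
  assumes "\<forall>z. \<not> (z islimpt R)"
  shows "finite {c. frieze_pattern n (R - {0}) c}"
proof -
  have "\<not> (0::complex) islimpt R" using assms by blast
  then obtain \<delta> where dpos: "\<delta> > 0" and dR: "\<forall>x'\<in>R. x' \<noteq> 0 \<longrightarrow> \<not> dist x' 0 < \<delta>"
    unfolding islimpt_approachable by blast
  have dS: "\<forall>s\<in>R-{0}. \<delta> \<le> norm s" using dR by (auto simp: not_less)
  define B where "B = (max 1 (2*(real n+3)/\<delta>))^(n+1)"
  have finRB: "finite (R \<inter> cball 0 B)"
  proof (rule ccontr)
    assume "infinite (R \<inter> cball 0 B)"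
    then obtain z where "z islimpt (R \<inter> cball 0 B)"
      using Heine_Borel_imp_Bolzano_Weierstrass[of "cball 0 B" "R \<inter> cball 0 B"] by auto
    then have "z islimpt R" by (rule islimpt_subset) auto
    then show False using assms by blast
  qed
  define A where "A = insert 0 (insert 1 (R \<inter> cball 0 B))"
  have finA: "finite A" unfolding A_def using finRB by simp
  define X where "X = {c. frieze_pattern n (R - {0}) c}"
  define F where "F c = map (\<lambda>j. c(0, int j)) [0..<n+4]" for c :: "int \<times> int \<Rightarrow> complex"
  have frzX: "frz n (R-{0}) c" if "c \<in> X" for c
    using that unfolding X_def frz_def by simp
  have inj: "inj_on F X"
  proof (rule inj_onI)
    fix c c' assume c: "c \<in> X" and c': "c' \<in> X" and eq: "F c = F c'"
    have "\<forall>j\<in>set [0..<n+4]. c(0,int j) = c'(0,int j)" using eq unfolding F_def by (simp add: map_eq_conv)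
    then have E: "\<forall>j. 0 \<le> j \<and> j \<le> int n+3 \<longrightarrow> c(0,j) = c'(0,j)"
    proof (intro allI impI)
      fix j :: int assume h: "\<forall>j\<in>set [0..<n+4]. c(0,int j) = c'(0,int j)" and j: "0 \<le> j \<and> j \<le> int n+3"
      have "nat j \<in> set [0..<n+4]" using j by auto
      then show "c(0,j) = c'(0,j)" using h j by force
    qed
    show "c = c'" by (rule rows_eq[OF frzX[OF c] frzX[OF c'] E])
  qed
  have sub: "F ` X \<subseteq> {xs. set xs \<subseteq> A \<and> length xs = n+4}"
  proof
    fix xs assume "xs \<in> F ` X"
    then obtain c where c: "c \<in> X" and xs: "xs = F c" by blast
    interpret frz n "R-{0}" c by (rule frzX[OF c])
    have "c(0, int j) \<in> A" if "j < n+4" for j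
    proof -
      consider "j = 0" | "j = 1" | "j = n+2" | "j = n+3" | "2 \<le> j \<and> j \<le> n+1" using \<open>j < n+4\<close> by linarith
      then show ?thesis
      proof cases
        case 1 then show ?thesis using b0[of 0] unfolding A_def by simp
      next
        case 2 then show ?thesis using b2[of 0] unfolding A_def by simp
      next
        case 3 then show ?thesis using b3[of 0] unfolding A_def by (simp add: add.commute)
      next
        case 4 then show ?thesis using b1[of 0] unfolding A_def by simp
      next
        case 5
        have "c(0,int j) \<in> R - {0}" using inS[of 0 "int j"] 5 by simp
        moreover have "norm (c(0,int j)) \<le> B" unfolding B_def
          using bound[OF dpos dS, of "int j"] 5 by simp
        ultimately show ?thesis unfolding A_def by simp
      qed
    qed
    then show "xs \<in> {xs. set xs \<subseteq> A \<and> length xs = n+4}" unfolding xs F_def by auto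
  qed
  have "finite (F ` X)" by (rule finite_subset[OF sub finite_lists_length_eq[OF finA]])
  then show ?thesis using finite_imageD[OF _ inj] unfolding X_def by blast
qed

end
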